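(* Let $G$ be a countable discrete group, let $A\subset\mathcal B(L^p(X,\mu))$ be a weak* closed subalgebra ($p\in(1,\infty)$, $L^p(X,\mu)$ $\sigma$-finite separable), and let $\alpha$ be a weak* continuous isometric action of $G$ on $A$. Then for every $t\in G$ there is a weak* continuous contractive linear map $E_t:W^*_p(G,A,\alpha)\to A$ such that $E_t\big(\sum_{s\in G}\pi(a_s)\lambda_p^E(s)\big)=a_t$ for every finitely supported family $(a_s)_{s\in G}$ in $A$.
   Context: $E=L^p(X,\mu)$; $\mathcal B(E)$ carries the weak* topology as dual of the nuclear operators $E'\widehat\otimes E$. A weak* continuous isometric action is a homomorphism $\alpha$ from $G$ into isometric weak* continuous automorphisms of $A$. On $\ell^p(G,E)=\ell^p(G)\otimes_pE$, $(\pi(a)\xi)(s)=\alpha_{s^{-1}}(a)\xi(s)$ and $(\lambda_p^E(s)\xi)(t)=\xi(s^{-1}t)$; $W^*_p(G,A,\alpha)$ is the weak* closure in $\mathcal B(\ell^p(G)\otimes_pE)$ of the finite sums $\sum_s\pi(a_s)\lambda_p^E(s)$. *)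

theory Defs
  imports "HOL-Analysis.Analysis" "HOL-Library.Function_Algebras"
begin

text \<open>Concrete model of L^p(X,mu) (complex scalars): p-integrable measurable functions,
  identified up to a.e. equality via ae_eq. Operators on L^p are functions on functions,
  identified via op_eq (agreement a.e. on every L^p input). Sums of operators and the zero
  operator come from the pointwise algebra on function types.\<close>

type_synonym 'x op = "('x \<Rightarrow> complex) \<Rightarrow> ('x \<Rightarrow> complex)"

definition Lp :: "'x measure \<Rightarrow> real \<Rightarrow> ('x \<Rightarrow> complex) set" where
  "Lp M p = {f. f \<in> borel_measurable M \<and> integrable M (\<lambda>x. norm (f x) powr p)}"

definition lp_norm :: "'x measure \<Rightarrow> real \<Rightarrow> ('x \<Rightarrow> complex) \<Rightarrow> real" where
  "lp_norm M p f = (\<integral>x. norm (f x) powr p \<partial>M) powr (1 / p)"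

definition conj_exp :: "real \<Rightarrow> real" where
  "conj_exp p = p / (p - 1)"

definition ae_eq :: "'x measure \<Rightarrow> ('x \<Rightarrow> complex) \<Rightarrow> ('x \<Rightarrow> complex) \<Rightarrow> bool" where
  "ae_eq M f g \<longleftrightarrow> (AE x in M. f x = g x)"

definition separable_Lp :: "'x measure \<Rightarrow> real \<Rightarrow> bool" where
  "separable_Lp M p \<longleftrightarrow> (\<exists>D. countable D \<and> D \<subseteq> Lp M p \<and>
     (\<forall>f\<in>Lp M p. \<forall>\<epsilon>>0. \<exists>d\<in>D. lp_norm M p (\<lambda>x. f x - d x) < \<epsilon>))"

definition op_eq :: "'x measure \<Rightarrow> real \<Rightarrow> 'x op \<Rightarrow> 'x op \<Rightarrow> bool" where
  "op_eq M p T S \<longleftrightarrow> (\<forall>f\<in>Lp M p. ae_eq M (T f) (S f))"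

definition op_scale :: "complex \<Rightarrow> 'x op \<Rightarrow> 'x op" where
  "op_scale c T = (\<lambda>f x. c * T f x)"

definition bdd_op :: "'x measure \<Rightarrow> real \<Rightarrow> 'x op \<Rightarrow> bool" where
  "bdd_op M p T \<longleftrightarrow>
     (\<forall>f\<in>Lp M p. T f \<in> Lp M p) \<and>
     (\<forall>f\<in>Lp M p. \<forall>g\<in>Lp M p. ae_eq M f g \<longrightarrow> ae_eq M (T f) (T g)) \<and>
     (\<forall>f\<in>Lp M p. \<forall>g\<in>Lp M p. \<forall>c. ae_eq M (T (\<lambda>x. c * f x + g x)) (\<lambda>x. c * T f x + T g x)) \<and>
     (\<exists>C. \<forall>f\<in>Lp M p. lp_norm M p (T f) \<le> C * lp_norm M p f)"

definition op_norm :: "'x measure \<Rightarrow> real \<Rightarrow> 'x op \<Rightarrow> real" where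
  "op_norm M p T = Sup {lp_norm M p (T f) | f. f \<in> Lp M p \<and> lp_norm M p f \<le> 1}"

text \<open>A nuclear operator in E' (projective tensor) E, E = L^p, E' = L^q, represented by
  sequences (f_n) in L^p and (g_n) in L^q with sum of ||f_n|| ||g_n|| finite; it acts on B(E)
  by T maps to sum_n <T f_n, g_n>. These functionals define the weak* topology on B(E).\<close>
definition nuclear_rep :: "'x measure \<Rightarrow> real \<Rightarrow> (nat \<Rightarrow> 'x \<Rightarrow> complex) \<times> (nat \<Rightarrow> 'x \<Rightarrow> complex) \<Rightarrow> bool" where
  "nuclear_rep M p fg \<longleftrightarrow>
     (\<forall>n. fst fg n \<in> Lp M p \<and> snd fg n \<in> Lp M (conj_exp p)) \<and>
     summable (\<lambda>n. lp_norm M p (fst fg n) * lp_norm M (conj_exp p) (snd fg n))"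

definition nuc_apply :: "'x measure \<Rightarrow> (nat \<Rightarrow> 'x \<Rightarrow> complex) \<times> (nat \<Rightarrow> 'x \<Rightarrow> complex) \<Rightarrow> 'x op \<Rightarrow> complex" where
  "nuc_apply M fg T = (\<Sum>n. \<integral>x. T (fst fg n) x * snd fg n x \<partial>M)"

definition wstar_closure :: "'x measure \<Rightarrow> real \<Rightarrow> 'x op set \<Rightarrow> 'x op set" where
  "wstar_closure M p S = {T. bdd_op M p T \<and>
     (\<forall>\<Phi> \<epsilon>. finite \<Phi> \<and> \<Phi> \<subseteq> Collect (nuclear_rep M p) \<and> \<epsilon> > 0 \<longrightarrow>
        (\<exists>S'\<in>S. \<forall>\<phi>\<in>\<Phi>. norm (nuc_apply M \<phi> S' - nuc_apply M \<phi> T) < \<epsilon>))}"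

definition wstar_closed :: "'x measure \<Rightarrow> real \<Rightarrow> 'x op set \<Rightarrow> bool" where
  "wstar_closed M p S \<longleftrightarrow> S \<subseteq> Collect (bdd_op M p) \<and> wstar_closure M p S \<subseteq> S"

definition wstar_continuous_on ::
  "'x measure \<Rightarrow> real \<Rightarrow> 'x op set \<Rightarrow> 'y measure \<Rightarrow> real \<Rightarrow> ('x op \<Rightarrow> 'y op) \<Rightarrow> bool" where
  "wstar_continuous_on M p D N q F \<longleftrightarrow>
     (\<forall>T\<in>D. \<forall>\<psi>. nuclear_rep N q \<psi> \<longrightarrow> (\<forall>\<epsilon>>0. \<exists>\<Phi> \<delta>.
        finite \<Phi> \<and> \<Phi> \<subseteq> Collect (nuclear_rep M p) \<and> \<delta> > 0 \<and>
        (\<forall>S\<in>D. (\<forall>\<phi>\<in>\<Phi>. norm (nuc_apply M \<phi> S - nuc_apply M \<phi> T) < \<delta>) \<longrightarrow>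
            norm (nuc_apply N \<psi> (F S) - nuc_apply N \<psi> (F T)) < \<epsilon>)))"

definition wstar_closed_subalgebra :: "'x measure \<Rightarrow> real \<Rightarrow> 'x op set \<Rightarrow> bool" where
  "wstar_closed_subalgebra M p A \<longleftrightarrow> wstar_closed M p A \<and> 0 \<in> A \<and>
     (\<forall>a\<in>A. \<forall>b\<in>A. a + b \<in> A \<and> a \<circ> b \<in> A) \<and> (\<forall>c. \<forall>a\<in>A. op_scale c a \<in> A)"

definition wstar_isometric_action ::
  "'x measure \<Rightarrow> real \<Rightarrow> 'x op set \<Rightarrow> ('g::group_add \<Rightarrow> 'x op \<Rightarrow> 'x op) \<Rightarrow> bool" where
  "wstar_isometric_action M p A \<alpha> \<longleftrightarrow>
     (\<forall>s. \<forall>a\<in>A. \<alpha> s a \<in> A) \<and>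
     (\<forall>s. \<forall>a\<in>A. \<forall>b\<in>A. op_eq M p (\<alpha> s (a + b)) (\<alpha> s a + \<alpha> s b)) \<and>
     (\<forall>s. \<forall>a\<in>A. \<forall>b\<in>A. op_eq M p (\<alpha> s (a \<circ> b)) (\<alpha> s a \<circ> \<alpha> s b)) \<and>
     (\<forall>s c. \<forall>a\<in>A. op_eq M p (\<alpha> s (op_scale c a)) (op_scale c (\<alpha> s a))) \<and>
     (\<forall>s. \<forall>a\<in>A. op_norm M p (\<alpha> s a) = op_norm M p a) \<and>
     (\<forall>s. \<forall>b\<in>A. \<exists>a\<in>A. op_eq M p (\<alpha> s a) b) \<and>
     (\<forall>s. wstar_continuous_on M p A M p (\<alpha> s)) \<and>
     (\<forall>s t. \<forall>a\<in>A. op_eq M p (\<alpha> (s + t) a) (\<alpha> s (\<alpha> t a))) \<and>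
     (\<forall>a\<in>A. op_eq M p (\<alpha> 0 a) a)"

text \<open>l^p(G) \<otimes>_p L^p(M) is modelled as L^p of count_space G \<otimes> M.\<close>
definition cp_measure :: "'x measure \<Rightarrow> ('g \<times> 'x) measure" where
  "cp_measure M = count_space UNIV \<Otimes>\<^sub>M M"

definition cp_pi :: "('g::group_add \<Rightarrow> 'x op \<Rightarrow> 'x op) \<Rightarrow> 'x op \<Rightarrow> ('g \<times> 'x) op" where
  "cp_pi \<alpha> a = (\<lambda>\<xi> (s, x). \<alpha> (- s) a (\<lambda>y. \<xi> (s, y)) x)"

definition cp_lambda :: "'g::group_add \<Rightarrow> ('g \<times> 'x) op" where
  "cp_lambda s = (\<lambda>\<xi> (t, x). \<xi> (- s + t, x))"

definition cp_finsums ::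
  "'x op set \<Rightarrow> ('g::group_add \<Rightarrow> 'x op \<Rightarrow> 'x op) \<Rightarrow> ('g \<times> 'x) op set" where
  "cp_finsums A \<alpha> = {(\<Sum>s\<in>S. cp_pi \<alpha> (a s) \<circ> cp_lambda s) | S a. finite S \<and> (\<forall>s. a s \<in> A)}"

definition Wstar_crossed ::
  "'x measure \<Rightarrow> real \<Rightarrow> 'x op set \<Rightarrow> ('g::group_add \<Rightarrow> 'x op \<Rightarrow> 'x op) \<Rightarrow> ('g \<times> 'x) op set" where
  "Wstar_crossed M p A \<alpha> = wstar_closure (cp_measure M) p (cp_finsums A \<alpha>)"

end

theory Submission
  imports Defs
begin

definition inj0 :: "'g \<Rightarrow> ('x \<Rightarrow> 'b::zero) \<Rightarrow> ('g \<times> 'x \<Rightarrow> 'b)" where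
  "inj0 u0 k = (\<lambda>(u,x). if u = u0 then k x else 0)"

lemma inj0_meas:
  fixes u0 :: "'g::countable"
  assumes "k \<in> borel_measurable M"
  shows "inj0 u0 k \<in> borel_measurable (count_space UNIV \<Otimes>\<^sub>M M)"
proof -
  have "inj0 u0 k = (\<lambda>z. if fst z = u0 then k (snd z) else 0)"
    by (auto simp: inj0_def fun_eq_iff)
  also have "\<dots> \<in> borel_measurable (count_space UNIV \<Otimes>\<^sub>M M)"
    using assms by measurable
  finally show ?thesis .
qed

lemma slice_meas:
  assumes "h \<in> borel_measurable (count_space UNIV \<Otimes>\<^sub>M M)"
  shows "(\<lambda>x. h (u0, x)) \<in> borel_measurable M"
  using measurable_Pair2[OF assms] by simp

lemma nn_inj0:
  fixes u0 :: "'g::countable"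
  assumes sf: "sigma_finite_measure M" and k: "k \<in> borel_measurable M"
  shows "(\<integral>\<^sup>+z. ennreal (norm (inj0 u0 k z)) \<partial>(count_space UNIV \<Otimes>\<^sub>M M)) = (\<integral>\<^sup>+x. ennreal (norm (k x)) \<partial>M)"
proof -
  interpret sigma_finite_measure M by fact
  have m: "(\<lambda>z. ennreal (norm (inj0 u0 k z))) \<in> borel_measurable (count_space UNIV \<Otimes>\<^sub>M M)"
    using inj0_meas[OF k] by measurable
  have "(\<integral>\<^sup>+z. ennreal (norm (inj0 u0 k z)) \<partial>(count_space UNIV \<Otimes>\<^sub>M M))
     = (\<integral>\<^sup>+u. \<integral>\<^sup>+x. ennreal (norm (inj0 u0 k (u,x))) \<partial>M \<partial>count_space UNIV)"
    using nn_integral_fst[OF m] by simp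
  also have "\<dots> = (\<integral>\<^sup>+u. (\<integral>\<^sup>+x. ennreal (norm (k x)) \<partial>M) * indicator {u0} u \<partial>count_space UNIV)"
    by (intro nn_integral_cong) (auto simp: inj0_def indicator_def)
  also have "\<dots> = (\<integral>\<^sup>+x. ennreal (norm (k x)) \<partial>M)"
    by (simp add: nn_integral_cmult_indicator)
  finally show ?thesis .
qed

lemma int_inj0:
  fixes u0 :: "'g::countable" and k :: "'x \<Rightarrow> 'b::{banach, second_countable_topology}"
  assumes sf: "sigma_finite_measure M"
  shows "integrable (count_space UNIV \<Otimes>\<^sub>M M) (inj0 u0 k) \<longleftrightarrow> integrable M k"
    and "integral\<^sup>L (count_space UNIV \<Otimes>\<^sub>M M) (inj0 u0 k) = integral\<^sup>L M k"
proof -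
  interpret M: sigma_finite_measure M by fact
  interpret C: sigma_finite_measure "count_space (UNIV::'g set)"
    by (rule sigma_finite_measure_count_space)
  interpret pair_sigma_finite "count_space (UNIV::'g set)" M ..
  have sl: "(\<lambda>x. inj0 u0 k (u0, x)) = k" by (simp add: inj0_def fun_eq_iff)
  show I: "integrable (count_space UNIV \<Otimes>\<^sub>M M) (inj0 u0 k) \<longleftrightarrow> integrable M k"
  proof
    assume i: "integrable (count_space UNIV \<Otimes>\<^sub>M M) (inj0 u0 k)"
    then have km: "k \<in> borel_measurable M"
      using slice_meas[of "inj0 u0 k" M u0] sl by auto
    show "integrable M k" using i nn_inj0[OF sf km, where ?u0.0=u0] km
      unfolding integrable_iff_bounded by simp
  next
    assume i: "integrable M k"
    then have km: "k \<in> borel_measurable M" by auto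
    show "integrable (count_space UNIV \<Otimes>\<^sub>M M) (inj0 u0 k)" using i nn_inj0[OF sf km, where ?u0.0=u0] inj0_meas[OF km]
      unfolding integrable_iff_bounded by simp
  qed
  show "integral\<^sup>L (count_space UNIV \<Otimes>\<^sub>M M) (inj0 u0 k) = integral\<^sup>L M k"
  proof (cases "integrable M k")
    case True
    then have i: "integrable (count_space UNIV \<Otimes>\<^sub>M M) (inj0 u0 k)" using I by simp
    have "integral\<^sup>L (count_space UNIV \<Otimes>\<^sub>M M) (inj0 u0 k) = (\<integral>u. (\<integral>x. inj0 u0 k (u, x) \<partial>M) \<partial>count_space UNIV)"
      using integral_fst'[OF i] by simp
    also have "\<dots> = (\<integral>u. (if u = u0 then integral\<^sup>L M k else 0) \<partial>count_space UNIV)"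
      by (intro Bochner_Integration.integral_cong) (auto simp: inj0_def)
    also have "\<dots> = integral\<^sup>L M k"
      by (subst lebesgue_integral_count_space_finite_support) auto
    finally show ?thesis .
  next
    case False
    then show ?thesis using I by (simp add: not_integrable_integral_eq)
  qed
qed

lemma Lp_inj0:
  fixes u0 :: "'g::countable"
  assumes sf: "sigma_finite_measure M" and f: "f \<in> Lp M r"
  shows "inj0 u0 f \<in> Lp (cp_measure M) r" and "lp_norm (cp_measure M) r (inj0 u0 f) = lp_norm M r f"
proof -
  have eq: "(\<lambda>z. norm (inj0 u0 f z) powr r) = inj0 u0 (\<lambda>x. norm (f x) powr r)"
    by (auto simp: inj0_def fun_eq_iff)
  have fm: "f \<in> borel_measurable M" and fi: "integrable M (\<lambda>x. norm (f x) powr r)"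
    using f by (auto simp: Lp_def)
  have "integrable (count_space UNIV \<Otimes>\<^sub>M M) (\<lambda>z. norm (inj0 u0 f z) powr r)"
    unfolding eq using int_inj0(1)[OF sf, of u0 "\<lambda>x. norm (f x) powr r"] fi by simp
  then show "inj0 u0 f \<in> Lp (cp_measure M) r"
    using inj0_meas[OF fm, of u0] unfolding Lp_def cp_measure_def by simp
  show "lp_norm (cp_measure M) r (inj0 u0 f) = lp_norm M r f"
    unfolding lp_norm_def cp_measure_def eq int_inj0(2)[OF sf] ..
qed

lemma Lp_slice:
  fixes u0 :: "'g::countable" and h :: "'g \<times> 'x \<Rightarrow> complex"
  assumes sf: "sigma_finite_measure M" and h: "h \<in> Lp (cp_measure M) r" and r: "r > 0"
  shows "(\<lambda>x. h (u0, x)) \<in> Lp M r" and "lp_norm M r (\<lambda>x. h (u0, x)) \<le> lp_norm (cp_measure M) r h"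
proof -
  have hm: "h \<in> borel_measurable (count_space UNIV \<Otimes>\<^sub>M M)"
    and hi: "integrable (count_space UNIV \<Otimes>\<^sub>M M) (\<lambda>z. norm (h z) powr r)"
    using h by (auto simp: Lp_def cp_measure_def)
  have sm: "(\<lambda>x. h (u0, x)) \<in> borel_measurable M" using slice_meas[OF hm] .
  have gm: "inj0 u0 (\<lambda>x. norm (h (u0, x)) powr r) \<in> borel_measurable (count_space UNIV \<Otimes>\<^sub>M M)"
    by (rule inj0_meas) (use sm in measurable)
  have le: "inj0 u0 (\<lambda>x. norm (h (u0, x)) powr r) z \<le> norm (h z) powr r" for z
    by (cases z) (auto simp: inj0_def)
  have gi: "integrable (count_space UNIV \<Otimes>\<^sub>M M) (inj0 u0 (\<lambda>x. norm (h (u0, x)) powr r))"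
    by (rule Bochner_Integration.integrable_bound[OF hi gm]) (auto simp: inj0_def le)
  then have si: "integrable M (\<lambda>x. norm (h (u0, x)) powr r)"
    using int_inj0(1)[OF sf] by blast
  then show "(\<lambda>x. h (u0, x)) \<in> Lp M r" using sm by (simp add: Lp_def)
  have "(\<integral>x. norm (h (u0, x)) powr r \<partial>M) = integral\<^sup>L (count_space UNIV \<Otimes>\<^sub>M M) (inj0 u0 (\<lambda>x. norm (h (u0, x)) powr r))"
    using int_inj0(2)[OF sf] by metis
  also have "\<dots> \<le> integral\<^sup>L (count_space UNIV \<Otimes>\<^sub>M M) (\<lambda>z. norm (h z) powr r)"
    by (rule Bochner_Integration.integral_mono[OF gi hi le])
  finally have "(\<integral>x. norm (h (u0, x)) powr r \<partial>M) \<le> integral\<^sup>L (count_space UNIV \<Otimes>\<^sub>M M) (\<lambda>z. norm (h z) powr r)" .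
  moreover have "0 \<le> (\<integral>x. norm (h (u0, x)) powr r \<partial>M)" by (rule integral_nonneg_AE) auto
  ultimately show "lp_norm M r (\<lambda>x. h (u0, x)) \<le> lp_norm (cp_measure M) r h"
    unfolding lp_norm_def cp_measure_def using r by (intro powr_mono2) auto
qed

lemma AE_slice:
  fixes u0 :: "'g::countable"
  assumes sf: "sigma_finite_measure M" and ae: "AE z in cp_measure M. P z"
  shows "AE x in M. P (u0, x)"
proof -
  interpret M: sigma_finite_measure M by fact
  interpret C: sigma_finite_measure "count_space (UNIV::'g set)"
    by (rule sigma_finite_measure_count_space)
  interpret pair_sigma_finite "count_space (UNIV::'g set)" M ..
  have "AE u in count_space UNIV. AE x in M. P (u, x)"
    using AE_pair ae unfolding cp_measure_def by blast
  then show ?thesis by (simp add: AE_count_space)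
qed

lemma Lp_zero: "(\<lambda>_. 0) \<in> Lp M p"
  by (simp add: Lp_def)

lemma bdd_op_zero:
  assumes "bdd_op M p T"
  shows "ae_eq M (T (\<lambda>_. 0)) (\<lambda>_. 0)"
proof -
  have lin: "\<forall>f\<in>Lp M p. \<forall>g\<in>Lp M p. \<forall>c. ae_eq M (T (\<lambda>x. c * f x + g x)) (\<lambda>x. c * T f x + T g x)"
    using assms unfolding bdd_op_def by simp
  have "ae_eq M (T (\<lambda>x. 1 * 0 + 0)) (\<lambda>x. 1 * T (\<lambda>_. 0) x + T (\<lambda>_. 0) x)"
    using lin[rule_format, OF Lp_zero Lp_zero, of 1] .
  then have "AE x in M. T (\<lambda>_. 0) x = T (\<lambda>_. 0) x + T (\<lambda>_. 0) x"
    by (simp add: ae_eq_def)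
  then show ?thesis unfolding ae_eq_def by (rule eventually_mono) simp
qed

lemma sum_app: "(sum F S) x = (\<Sum>s\<in>S. F s x)"
  by (induct S rule: infinite_finite_induct) auto


lemma AE_lift:
  fixes u0 :: "'g::countable"
  assumes sf: "sigma_finite_measure M" and km: "k \<in> borel_measurable M" and ae: "AE x in M. k x = 0"
  shows "AE z in cp_measure M. inj0 u0 k z = (0::complex)"
proof -
  have "(\<integral>\<^sup>+x. ennreal (norm (k x)) \<partial>M) = 0"
    using ae km by (subst nn_integral_0_iff_AE) (auto elim!: eventually_mono)
  then have "(\<integral>\<^sup>+z. ennreal (norm (inj0 u0 k z)) \<partial>cp_measure M) = 0"
    using nn_inj0[OF sf km, where ?u0.0=u0] by (simp add: cp_measure_def)
  moreover have "(\<lambda>z. ennreal (norm (inj0 u0 k z))) \<in> borel_measurable (cp_measure M)"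
    using inj0_meas[OF km, where ?u0.0=u0] unfolding cp_measure_def by measurable
  ultimately show ?thesis
    by (subst (asm) nn_integral_0_iff_AE) (auto elim!: eventually_mono)
qed

lemma lp_norm_nonneg: "0 \<le> lp_norm M p f"
  by (simp add: lp_norm_def)

definition Eop :: "'g::group_add \<Rightarrow> ('g \<times> 'x) op \<Rightarrow> 'x op" where
  "Eop t w = (\<lambda>f x. w (inj0 (-t) f) (0, x))"

lemma E_bdd:
  fixes t :: "'g::{group_add,countable}"
  assumes sf: "sigma_finite_measure M" and p: "p > 0" and w: "bdd_op (cp_measure M) p w"
  shows "bdd_op M p (Eop t w)"
    and "\<And>f. f \<in> Lp M p \<Longrightarrow> lp_norm M p (Eop t w f) \<le> lp_norm (cp_measure M) p (w (inj0 (-t) f))"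
proof -
  have w1: "\<And>\<xi>. \<xi> \<in> Lp (cp_measure M) p \<Longrightarrow> w \<xi> \<in> Lp (cp_measure M) p"
    and w2: "\<And>\<xi> \<eta>. \<xi> \<in> Lp (cp_measure M) p \<Longrightarrow> \<eta> \<in> Lp (cp_measure M) p \<Longrightarrow> ae_eq (cp_measure M) \<xi> \<eta> \<Longrightarrow> ae_eq (cp_measure M) (w \<xi>) (w \<eta>)"
    and w3: "\<And>\<xi> \<eta> c. \<xi> \<in> Lp (cp_measure M) p \<Longrightarrow> \<eta> \<in> Lp (cp_measure M) p \<Longrightarrow> ae_eq (cp_measure M) (w (\<lambda>x. c * \<xi> x + \<eta> x)) (\<lambda>x. c * w \<xi> x + w \<eta> x)"
    using w unfolding bdd_op_def by blast+
  obtain C where C: "\<And>\<xi>. \<xi> \<in> Lp (cp_measure M) p \<Longrightarrow> lp_norm (cp_measure M) p (w \<xi>) \<le> C * lp_norm (cp_measure M) p \<xi>"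
    using w unfolding bdd_op_def by blast
  have ef: "Eop t w f = (\<lambda>x. w (inj0 (-t) f) (0, x))" for f by (simp add: Eop_def)
  have L1: "Eop t w f \<in> Lp M p" if f: "f \<in> Lp M p" for f
    unfolding ef by (rule Lp_slice(1)[OF sf w1[OF Lp_inj0(1)[OF sf f]] p])
  show L2: "lp_norm M p (Eop t w f) \<le> lp_norm (cp_measure M) p (w (inj0 (-t) f))" if f: "f \<in> Lp M p" for f
    unfolding ef by (rule Lp_slice(2)[OF sf w1[OF Lp_inj0(1)[OF sf f]] p])
  show "bdd_op M p (Eop t w)"
    unfolding bdd_op_def
  proof (intro conjI ballI allI impI)
    fix f assume "f \<in> Lp M p" then show "Eop t w f \<in> Lp M p" by (rule L1)
  next
    fix f g assume f: "f \<in> Lp M p" and g: "g \<in> Lp M p" and fg: "ae_eq M f g"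
    have fm: "(\<lambda>x. f x - g x) \<in> borel_measurable M" using f g by (auto simp: Lp_def)
    have "AE z in cp_measure M. inj0 (-t) (\<lambda>x. f x - g x) z = 0"
      by (rule AE_lift[OF sf fm]) (use fg in \<open>auto simp: ae_eq_def elim!: eventually_mono\<close>)
    then have "ae_eq (cp_measure M) (inj0 (-t) f) (inj0 (-t) g)"
      unfolding ae_eq_def by (rule eventually_mono) (auto simp: inj0_def split: if_splits)
    then have "ae_eq (cp_measure M) (w (inj0 (-t) f)) (w (inj0 (-t) g))"
      using w2 Lp_inj0(1)[OF sf f] Lp_inj0(1)[OF sf g] by blast
    then show "ae_eq M (Eop t w f) (Eop t w g)"
      unfolding ae_eq_def ef by (rule AE_slice[OF sf])
  next
    fix f g c assume f: "f \<in> Lp M p" and g: "g \<in> Lp M p"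
    have eq: "inj0 (-t) (\<lambda>x. c * f x + g x) = (\<lambda>z. c * inj0 (-t) f z + inj0 (-t) g z)"
      by (auto simp: inj0_def fun_eq_iff)
    have "ae_eq (cp_measure M) (w (inj0 (-t) (\<lambda>x. c * f x + g x))) (\<lambda>z. c * w (inj0 (-t) f) z + w (inj0 (-t) g) z)"
      unfolding eq using w3 Lp_inj0(1)[OF sf f] Lp_inj0(1)[OF sf g] by blast
    then show "ae_eq M (Eop t w (\<lambda>x. c * f x + g x)) (\<lambda>x. c * Eop t w f x + Eop t w g x)"
      unfolding ae_eq_def ef by (rule AE_slice[OF sf])
  next
    show "\<exists>C. \<forall>f\<in>Lp M p. lp_norm M p (Eop t w f) \<le> C * lp_norm M p f"
    proof (intro exI ballI)
      fix f assume f: "f \<in> Lp M p"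
      have "lp_norm M p (Eop t w f) \<le> lp_norm (cp_measure M) p (w (inj0 (-t) f))" by (rule L2[OF f])
      also have "\<dots> \<le> C * lp_norm (cp_measure M) p (inj0 (-t) f)" by (rule C[OF Lp_inj0(1)[OF sf f]])
      also have "\<dots> = C * lp_norm M p f" using Lp_inj0(2)[OF sf f, where ?u0.0="-t"] by simp
      finally show "lp_norm M p (Eop t w f) \<le> C * lp_norm M p f" .
    qed
  qed
qed

lemma E_opnorm:
  fixes t :: "'g::{group_add,countable}"
  assumes sf: "sigma_finite_measure M" and p: "p > 0" and w: "bdd_op (cp_measure M) p w"
  shows "op_norm M p (Eop t w) \<le> op_norm (cp_measure M) p w"
proof -
  obtain C where C: "\<And>\<xi>. \<xi> \<in> Lp (cp_measure M) p \<Longrightarrow> lp_norm (cp_measure M) p (w \<xi>) \<le> C * lp_norm (cp_measure M) p \<xi>"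
    using w unfolding bdd_op_def by blast
  let ?B = "{lp_norm (cp_measure M) p (w f) | f. f \<in> Lp (cp_measure M) p \<and> lp_norm (cp_measure M) p f \<le> 1}"
  have bdd: "bdd_above ?B"
  proof (rule bdd_aboveI)
    fix y assume "y \<in> ?B"
    then obtain f where f: "f \<in> Lp (cp_measure M) p" "lp_norm (cp_measure M) p f \<le> 1" and y: "y = lp_norm (cp_measure M) p (w f)" by blast
    have "y \<le> C * lp_norm (cp_measure M) p f" using C[OF f(1)] y by simp
    also have "\<dots> \<le> \<bar>C\<bar> * lp_norm (cp_measure M) p f"
      by (intro mult_right_mono) (auto simp: lp_norm_nonneg)
    also have "\<dots> \<le> \<bar>C\<bar> * 1" using f(2) by (intro mult_left_mono) auto
    finally show "y \<le> \<bar>C\<bar>" by simp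
  qed
  have ne: "{lp_norm M p (Eop t w f) | f. f \<in> Lp M p \<and> lp_norm M p f \<le> 1} \<noteq> {}"
    using Lp_zero[of M p] by (auto simp: lp_norm_def)
  show ?thesis unfolding op_norm_def
  proof (rule cSup_least[OF ne])
    fix y assume "y \<in> {lp_norm M p (Eop t w f) | f. f \<in> Lp M p \<and> lp_norm M p f \<le> 1}"
    then obtain f where f: "f \<in> Lp M p" "lp_norm M p f \<le> 1" and y: "y = lp_norm M p (Eop t w f)" by blast
    have "y \<le> lp_norm (cp_measure M) p (w (inj0 (-t) f))" using E_bdd(2)[OF sf p w f(1)] y by simp
    also have "\<dots> \<le> Sup ?B"
      by (rule cSup_upper[OF _ bdd]) (use f Lp_inj0[OF sf f(1), of "-t"] in auto)
    finally show "y \<le> Sup ?B" .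
  qed
qed

definition pb :: "'g::group_add \<Rightarrow> (nat \<Rightarrow> 'x \<Rightarrow> complex) \<times> (nat \<Rightarrow> 'x \<Rightarrow> complex) \<Rightarrow> (nat \<Rightarrow> 'g \<times> 'x \<Rightarrow> complex) \<times> (nat \<Rightarrow> 'g \<times> 'x \<Rightarrow> complex)" where
  "pb t \<phi> = ((\<lambda>n. inj0 (-t) (fst \<phi> n)), (\<lambda>n. inj0 0 (snd \<phi> n)))"

lemma nuc_pb:
  fixes t :: "'g::{group_add,countable}"
  assumes sf: "sigma_finite_measure M"
  shows "nuc_apply M \<phi> (Eop t S) = nuc_apply (cp_measure M) (pb t \<phi>) S"
proof -
  have "(\<integral>x. Eop t S (fst \<phi> n) x * snd \<phi> n x \<partial>M) = (\<integral>z. S (fst (pb t \<phi>) n) z * snd (pb t \<phi>) n z \<partial>cp_measure M)" for n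
  proof -
    have eq: "(\<lambda>z. S (fst (pb t \<phi>) n) z * snd (pb t \<phi>) n z) = inj0 0 (\<lambda>x. S (inj0 (-t) (fst \<phi> n)) (0, x) * snd \<phi> n x)"
      by (auto simp: pb_def inj0_def fun_eq_iff)
    show ?thesis unfolding eq cp_measure_def int_inj0(2)[OF sf] by (simp add: Eop_def)
  qed
  then show ?thesis unfolding nuc_apply_def by simp
qed

lemma nuc_rep_pb:
  fixes t :: "'g::{group_add,countable}"
  assumes sf: "sigma_finite_measure M" and n: "nuclear_rep M p \<phi>"
  shows "nuclear_rep (cp_measure M) p (pb t \<phi>)"
proof -
  have a: "\<And>n. fst \<phi> n \<in> Lp M p" "\<And>n. snd \<phi> n \<in> Lp M (conj_exp p)"
    and s: "summable (\<lambda>n. lp_norm M p (fst \<phi> n) * lp_norm M (conj_exp p) (snd \<phi> n))"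
    using n unfolding nuclear_rep_def by auto
  show ?thesis unfolding nuclear_rep_def pb_def using a s by (simp add: Lp_inj0[OF sf])
qed


lemma E_finsum:
  fixes t :: "'g::group_add"
  shows "Eop t (\<Sum>s\<in>S. cp_pi \<alpha> (a s) \<circ> cp_lambda s) f = (\<lambda>x. \<Sum>s\<in>S. \<alpha> 0 (a s) (\<lambda>y. if s = t then f y else 0) x)"
  by (auto simp: Eop_def sum_app cp_pi_def cp_lambda_def inj0_def fun_eq_iff)

lemma E_finsum_ae:
  fixes t :: "'g::group_add"
  assumes S: "finite S" and bd: "\<And>s. bdd_op M p (\<alpha> 0 (a s))" and f: "f \<in> Lp M p"
  shows "AE x in M. Eop t (\<Sum>s\<in>S. cp_pi \<alpha> (a s) \<circ> cp_lambda s) f x = (if t \<in> S then \<alpha> 0 (a t) f x else 0)"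
    and "Eop t (\<Sum>s\<in>S. cp_pi \<alpha> (a s) \<circ> cp_lambda s) f \<in> borel_measurable M"
proof -
  have inp: "(\<lambda>y. if s = t then f y else 0) \<in> Lp M p" for s
    using f Lp_zero[of M p] by (cases "s = t") auto
  have z: "AE x in M. \<alpha> 0 (a s) (\<lambda>_. 0) x = 0" for s
    using bdd_op_zero[OF bd[of s]] by (simp add: ae_eq_def)
  have "AE x in M. \<forall>s\<in>S - {t}. \<alpha> 0 (a s) (\<lambda>_. 0) x = 0"
    using S z by (intro AE_finite_allI) auto
  then show "AE x in M. Eop t (\<Sum>s\<in>S. cp_pi \<alpha> (a s) \<circ> cp_lambda s) f x = (if t \<in> S then \<alpha> 0 (a t) f x else 0)"
  proof (rule eventually_mono)
    fix x assume h: "\<forall>s\<in>S - {t}. \<alpha> 0 (a s) (\<lambda>_. 0) x = 0"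
    have "(\<Sum>s\<in>S. \<alpha> 0 (a s) (\<lambda>y. if s = t then f y else 0) x) = (\<Sum>s\<in>S. if s = t then \<alpha> 0 (a t) f x else 0)"
      using h by (intro sum.cong) auto
    then show "Eop t (\<Sum>s\<in>S. cp_pi \<alpha> (a s) \<circ> cp_lambda s) f x = (if t \<in> S then \<alpha> 0 (a t) f x else 0)"
      unfolding E_finsum using S by (simp add: sum.delta)
  qed
  have "\<alpha> 0 (a s) (\<lambda>y. if s = t then f y else 0) \<in> borel_measurable M" for s
    using bd[of s] inp[of s] by (auto simp: bdd_op_def Lp_def)
  then show "Eop t (\<Sum>s\<in>S. cp_pi \<alpha> (a s) \<circ> cp_lambda s) f \<in> borel_measurable M"
    unfolding E_finsum by (intro borel_measurable_sum) auto
qed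

lemma nuc_opeq:
  assumes n: "nuclear_rep M p \<phi>" and T: "bdd_op M p T"
    and Xm: "\<And>f. f \<in> Lp M p \<Longrightarrow> X f \<in> borel_measurable M" and eq: "op_eq M p X T"
  shows "nuc_apply M \<phi> X = nuc_apply M \<phi> T"
proof -
  have a: "\<And>n. fst \<phi> n \<in> Lp M p" "\<And>n. snd \<phi> n \<in> Lp M (conj_exp p)"
    using n unfolding nuclear_rep_def by auto
  have "(\<integral>x. X (fst \<phi> n) x * snd \<phi> n x \<partial>M) = (\<integral>x. T (fst \<phi> n) x * snd \<phi> n x \<partial>M)" for n
  proof (rule integral_cong_AE)
    have "T (fst \<phi> n) \<in> borel_measurable M" using T a(1)[of n] by (auto simp: bdd_op_def Lp_def)
    moreover have "snd \<phi> n \<in> borel_measurable M" using a(2)[of n] by (auto simp: Lp_def)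
    moreover have "X (fst \<phi> n) \<in> borel_measurable M" using Xm a(1) by blast
    ultimately show "(\<lambda>x. X (fst \<phi> n) x * snd \<phi> n x) \<in> borel_measurable M"
      "(\<lambda>x. T (fst \<phi> n) x * snd \<phi> n x) \<in> borel_measurable M" by measurable
    show "AE x in M. X (fst \<phi> n) x * snd \<phi> n x = T (fst \<phi> n) x * snd \<phi> n x"
      using eq a(1)[of n] unfolding op_eq_def ae_eq_def by (auto elim!: eventually_mono)
  qed
  then show ?thesis unfolding nuc_apply_def by simp
qed

lemma op_eq_trans:
  assumes "op_eq M p X Y" "op_eq M p Y Z" shows "op_eq M p X Z"
  unfolding op_eq_def ae_eq_def
proof
  fix f assume f: "f \<in> Lp M p"
  have "AE x in M. X f x = Y f x" "AE x in M. Y f x = Z f x"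
    using assms f unfolding op_eq_def ae_eq_def by auto
  then show "AE x in M. X f x = Z f x" by eventually_elim simp
qed

lemma op_eq_sym: "op_eq M p X Y \<Longrightarrow> op_eq M p Y X"
  unfolding op_eq_def ae_eq_def by (auto elim!: eventually_mono)

theorem mainTheorem7:
  fixes M :: "'x measure" and p :: real and A :: "'x op set"
    and \<alpha> :: "'g::{group_add, countable} \<Rightarrow> 'x op \<Rightarrow> 'x op"
  assumes "1 < p"
    and "sigma_finite_measure M"
    and "separable_Lp M p"
    and "wstar_closed_subalgebra M p A"
    and "wstar_isometric_action M p A \<alpha>"
  shows "\<forall>t. \<exists>E :: ('g \<times> 'x) op \<Rightarrow> 'x op.
     (\<forall>w\<in>Wstar_crossed M p A \<alpha>. E w \<in> A) \<and>
     (\<forall>c. \<forall>v\<in>Wstar_crossed M p A \<alpha>. \<forall>w\<in>Wstar_crossed M p A \<alpha>.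
        op_eq M p (E (op_scale c v + w)) (op_scale c (E v) + E w)) \<and>
     (\<forall>w\<in>Wstar_crossed M p A \<alpha>. op_norm M p (E w) \<le> op_norm (cp_measure M) p w) \<and>
     wstar_continuous_on (cp_measure M) p (Wstar_crossed M p A \<alpha>) M p E \<and>
     (\<forall>S a. finite S \<and> (\<forall>s. a s \<in> A) \<and> (\<forall>s. s \<notin> S \<longrightarrow> op_eq M p (a s) 0) \<longrightarrow>
        op_eq M p (E (\<Sum>s\<in>S. cp_pi \<alpha> (a s) \<circ> cp_lambda s)) (a t))"
proof (intro allI)
  fix t :: 'g
  have sf: "sigma_finite_measure M" by fact
  have p0: "p > 0" using assms(1) by simp
  note W4 = assms(4)[unfolded wstar_closed_subalgebra_def wstar_closed_def]
  have Asub': "A \<subseteq> Collect (bdd_op M p)" by (rule conjunct1[OF conjunct1[OF W4]])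
  have clos: "wstar_closure M p A \<subseteq> A" by (rule conjunct2[OF conjunct1[OF W4]])
  have zA: "0 \<in> A" by (rule conjunct1[OF conjunct2[OF W4]])
  have Asub: "\<And>a. a \<in> A \<Longrightarrow> bdd_op M p a" using Asub' by blast
  note W5 = assms(5)[unfolded wstar_isometric_action_def]
  have act': "\<forall>s. \<forall>a\<in>A. \<alpha> s a \<in> A" by (rule conjunct1[OF W5])
  have act0': "\<forall>a\<in>A. op_eq M p (\<alpha> 0 a) a"
    by (rule conjunct2[OF conjunct2[OF conjunct2[OF conjunct2[OF conjunct2[OF conjunct2[OF conjunct2[OF conjunct2[OF W5]]]]]]]])
  have act: "\<And>s a. a \<in> A \<Longrightarrow> \<alpha> s a \<in> A" using act' by blast
  have act0: "\<And>a. a \<in> A \<Longrightarrow> op_eq M p (\<alpha> 0 a) a" using act0' by blast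
  have Wd: "\<And>w. w \<in> Wstar_crossed M p A \<alpha> \<Longrightarrow> bdd_op (cp_measure M) p w \<and>
     (\<forall>\<Phi> \<epsilon>. finite \<Phi> \<and> \<Phi> \<subseteq> Collect (nuclear_rep (cp_measure M) p) \<and> \<epsilon> > 0 \<longrightarrow>
        (\<exists>S'\<in>cp_finsums A \<alpha>. \<forall>\<phi>\<in>\<Phi>. norm (nuc_apply (cp_measure M) \<phi> S' - nuc_apply (cp_measure M) \<phi> w) < \<epsilon>))"
    unfolding Wstar_crossed_def wstar_closure_def mem_Collect_eq by assumption
  have Wb: "\<And>w. w \<in> Wstar_crossed M p A \<alpha> \<Longrightarrow> bdd_op (cp_measure M) p w"
    using Wd by (rule conjunct1)
  have Wa: "\<exists>S'\<in>cp_finsums A \<alpha>. \<forall>\<phi>\<in>\<Phi>. norm (nuc_apply (cp_measure M) \<phi> S' - nuc_apply (cp_measure M) \<phi> w) < \<epsilon>"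
    if "w \<in> Wstar_crossed M p A \<alpha>" "finite \<Phi>" "\<Phi> \<subseteq> Collect (nuclear_rep (cp_measure M) p)" "(\<epsilon>::real) > 0" for w \<Phi> \<epsilon>
    using conjunct2[OF Wd[OF that(1)], rule_format, of \<Phi> \<epsilon>] that(2-4) by blast
  have key: "op_eq M p (Eop t (\<Sum>s\<in>S. cp_pi \<alpha> (a s) \<circ> cp_lambda s)) (if t \<in> S then \<alpha> 0 (a t) else 0)"
    if S: "finite S" and a: "\<forall>s. a s \<in> A" for S a
    unfolding op_eq_def ae_eq_def
  proof
    fix f assume f: "f \<in> Lp M p"
    show "AE x in M. Eop t (\<Sum>s\<in>S. cp_pi \<alpha> (a s) \<circ> cp_lambda s) f x = (if t \<in> S then \<alpha> 0 (a t) else 0) f x"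
    proof -
      have bd: "\<And>s. bdd_op M p (\<alpha> 0 (a s))" using Asub act a by blast
      have ev: "(if t \<in> S then \<alpha> 0 (a t) else 0) f x = (if t \<in> S then \<alpha> 0 (a t) f x else 0)" for x
        by simp
      show ?thesis unfolding ev by (rule E_finsum_ae(1)[where \<alpha>=\<alpha> and a=a and t=t and M=M and p=p and S=S and f=f, OF S bd f])
    qed
  qed
  have keym: "Eop t (\<Sum>s\<in>S. cp_pi \<alpha> (a s) \<circ> cp_lambda s) f \<in> borel_measurable M"
    if S: "finite S" and a: "\<forall>s. a s \<in> A" and f: "f \<in> Lp M p" for S a f
  proof -
    have bd: "\<And>s. bdd_op M p (\<alpha> 0 (a s))" using Asub act a by blast
    show ?thesis by (rule E_finsum_ae(2)[where \<alpha>=\<alpha> and a=a and t=t and M=M and p=p and S=S and f=f, OF S bd f])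
  qed
  show "\<exists>E :: ('g \<times> 'x) op \<Rightarrow> 'x op.
     (\<forall>w\<in>Wstar_crossed M p A \<alpha>. E w \<in> A) \<and>
     (\<forall>c. \<forall>v\<in>Wstar_crossed M p A \<alpha>. \<forall>w\<in>Wstar_crossed M p A \<alpha>.
        op_eq M p (E (op_scale c v + w)) (op_scale c (E v) + E w)) \<and>
     (\<forall>w\<in>Wstar_crossed M p A \<alpha>. op_norm M p (E w) \<le> op_norm (cp_measure M) p w) \<and>
     wstar_continuous_on (cp_measure M) p (Wstar_crossed M p A \<alpha>) M p E \<and>
     (\<forall>S a. finite S \<and> (\<forall>s. a s \<in> A) \<and> (\<forall>s. s \<notin> S \<longrightarrow> op_eq M p (a s) 0) \<longrightarrow>
        op_eq M p (E (\<Sum>s\<in>S. cp_pi \<alpha> (a s) \<circ> cp_lambda s)) (a t))"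
  proof (intro exI[of _ "Eop t"] conjI)
    show "\<forall>w\<in>Wstar_crossed M p A \<alpha>. Eop t w \<in> A"
    proof
      fix w assume w: "w \<in> Wstar_crossed M p A \<alpha>"
      have "Eop t w \<in> wstar_closure M p A"
        unfolding wstar_closure_def
      proof (intro CollectI conjI allI impI)
        show "bdd_op M p (Eop t w)" by (rule E_bdd(1)[OF sf p0 Wb[OF w]])
        fix \<Phi> and \<epsilon> :: real assume h: "finite \<Phi> \<and> \<Phi> \<subseteq> Collect (nuclear_rep M p) \<and> \<epsilon> > 0"
        have sub: "pb t ` \<Phi> \<subseteq> Collect (nuclear_rep (cp_measure M) p)"
          using h nuc_rep_pb[OF sf] by blast
        obtain S' where S': "S' \<in> cp_finsums A \<alpha>"
          and app: "\<forall>\<phi>\<in>pb t ` \<Phi>. norm (nuc_apply (cp_measure M) \<phi> S' - nuc_apply (cp_measure M) \<phi> w) < \<epsilon>"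
          using Wa[OF w _ sub, of \<epsilon>] h by blast
        obtain S a where S'eq: "S' = (\<Sum>s\<in>S. cp_pi \<alpha> (a s) \<circ> cp_lambda s)" and S: "finite S" and a: "\<forall>s. a s \<in> A"
          using S' unfolding cp_finsums_def by blast
        define X where "X = (if t \<in> S then \<alpha> 0 (a t) else 0)"
        have XA: "X \<in> A" using zA act a by (auto simp: X_def)
        show "\<exists>S'\<in>A. \<forall>\<phi>\<in>\<Phi>. norm (nuc_apply M \<phi> S' - nuc_apply M \<phi> (Eop t w)) < \<epsilon>"
        proof (intro bexI[OF _ XA] ballI)
          fix \<phi> assume ph: "\<phi> \<in> \<Phi>"
          have n: "nuclear_rep M p \<phi>" using h ph by blast
          have "nuc_apply M \<phi> X = nuc_apply M \<phi> (Eop t S')"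
            unfolding S'eq
            by (rule nuc_opeq[OF n Asub[OF XA] keym[OF S a], symmetric]) (assumption, unfold X_def, rule key[OF S a])
          also have "\<dots> = nuc_apply (cp_measure M) (pb t \<phi>) S'" by (rule nuc_pb[OF sf])
          finally have e1: "nuc_apply M \<phi> X = nuc_apply (cp_measure M) (pb t \<phi>) S'" .
          have e2: "nuc_apply M \<phi> (Eop t w) = nuc_apply (cp_measure M) (pb t \<phi>) w" by (rule nuc_pb[OF sf])
          show "norm (nuc_apply M \<phi> X - nuc_apply M \<phi> (Eop t w)) < \<epsilon>"
            unfolding e1 e2 using app ph by blast
        qed
      qed
      then show "Eop t w \<in> A" using clos by blast
    qed
  next
    have eqE: "Eop t (op_scale c v + w) = op_scale c (Eop t v) + Eop t w" for c v w
      by (simp add: Eop_def op_scale_def fun_eq_iff)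
    then show "\<forall>c. \<forall>v\<in>Wstar_crossed M p A \<alpha>. \<forall>w\<in>Wstar_crossed M p A \<alpha>.
        op_eq M p (Eop t (op_scale c v + w)) (op_scale c (Eop t v) + Eop t w)"
      unfolding eqE by (simp add: op_eq_def ae_eq_def)
  next
    show "\<forall>w\<in>Wstar_crossed M p A \<alpha>. op_norm M p (Eop t w) \<le> op_norm (cp_measure M) p w"
      using E_opnorm[OF sf p0 Wb] by blast
  next
    show "wstar_continuous_on (cp_measure M) p (Wstar_crossed M p A \<alpha>) M p (Eop t)"
      unfolding wstar_continuous_on_def
    proof (intro ballI allI impI)
      fix T \<psi> and \<epsilon> :: real
      assume T: "T \<in> Wstar_crossed M p A \<alpha>" and \<psi>: "nuclear_rep M p \<psi>" and e: "\<epsilon> > 0"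
      show "\<exists>\<Phi> \<delta>. finite \<Phi> \<and> \<Phi> \<subseteq> Collect (nuclear_rep (cp_measure M) p) \<and> \<delta> > 0 \<and>
        (\<forall>S\<in>Wstar_crossed M p A \<alpha>. (\<forall>\<phi>\<in>\<Phi>. norm (nuc_apply (cp_measure M) \<phi> S - nuc_apply (cp_measure M) \<phi> T) < \<delta>) \<longrightarrow>
            norm (nuc_apply M \<psi> (Eop t S) - nuc_apply M \<psi> (Eop t T)) < \<epsilon>)"
        by (intro exI[of _ "{pb t \<psi>}"] exI[of _ \<epsilon>]) (simp add: e nuc_rep_pb[OF sf \<psi>] nuc_pb[OF sf])
    qed
  next
    show "\<forall>S a. finite S \<and> (\<forall>s. a s \<in> A) \<and> (\<forall>s. s \<notin> S \<longrightarrow> op_eq M p (a s) 0) \<longrightarrow>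
        op_eq M p (Eop t (\<Sum>s\<in>S. cp_pi \<alpha> (a s) \<circ> cp_lambda s)) (a t)"
    proof (intro allI impI)
      fix S :: "'g set" and a :: "'g \<Rightarrow> 'x op"
      assume h: "finite S \<and> (\<forall>s. a s \<in> A) \<and> (\<forall>s. s \<notin> S \<longrightarrow> op_eq M p (a s) (0::'x op))"
      have S: "finite S" and a: "\<forall>s. a s \<in> A" and z: "\<And>s. s \<notin> S \<Longrightarrow> op_eq M p (a s) 0"
        using h by auto
      have k: "op_eq M p (Eop t (\<Sum>s\<in>S. cp_pi \<alpha> (a s) \<circ> cp_lambda s)) (if t \<in> S then \<alpha> 0 (a t) else 0)"
        by (rule key[OF S a])
      show "op_eq M p (Eop t (\<Sum>s\<in>S. cp_pi \<alpha> (a s) \<circ> cp_lambda s)) (a t)"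
      proof (cases "t \<in> S")
        case True
        then have "op_eq M p (Eop t (\<Sum>s\<in>S. cp_pi \<alpha> (a s) \<circ> cp_lambda s)) (\<alpha> 0 (a t))" using k by simp
        then show ?thesis using op_eq_trans act0 a by blast
      next
        case False
        then have "op_eq M p (Eop t (\<Sum>s\<in>S. cp_pi \<alpha> (a s) \<circ> cp_lambda s)) 0" using k by simp
        then show ?thesis using op_eq_trans op_eq_sym[OF z[OF False]] by blast
      qed
    qed
  qed
qed

end
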